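(* Let $\mathbf{b}\in H_{1,2,2}$ have odd norm. Then there is exactly one unit $\mathbf{u}$ of $H_{1,2,2}$ such that $\mathbf{b}\mathbf{u}$ is primary, and exactly one unit $\mathbf{u}'$ of $H_{1,2,2}$ such that $\mathbf{u}'\mathbf{b}$ is primary.
   Context: Let $\mathbf{i},\mathbf{j},\mathbf{k}$ be the standard quaternion units; $\overline{\mathbf{q}}$ is quaternion conjugation and $N(\mathbf{q})=\mathbf{q}\overline{\mathbf{q}}$. $H_{1,2,2}$ is the subring of the quaternions equal to the $\mathbb{Z}$-module generated by $\mathbf{v}_1=1$, $\mathbf{v}_2=\mathbf{i}$, $\mathbf{v}_3=\tfrac12(1+\mathbf{i}+\sqrt2\,\mathbf{j})$, $\mathbf{v}_4=\tfrac12(1+\mathbf{i}+\sqrt2\,\mathbf{k})$; it has 24 units (elements of norm 1). Let $I = 2(1+\mathbf{i})H_{1,2,2}$ (equal to $H_{1,2,2}\,2(1+\mathbf{i})$). An element $\mathbf{q}\in H_{1,2,2}$ is primary if $\mathbf{q}-1\in I$ or $\mathbf{q}-(1+2\mathbf{v}_3)\in I$. *)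

theory Defs
  imports Main "HOL.Real" "HOL.NthRoot"
begin

datatype quat = Quat (re: real) (im1: real) (im2: real) (im3: real)

instantiation quat :: "{zero, one, plus, minus, uminus, times}"
begin
definition "0 = Quat 0 0 0 0"
definition "1 = Quat 1 0 0 0"
definition "p + q = Quat (re p + re q) (im1 p + im1 q) (im2 p + im2 q) (im3 p + im3 q)"
definition "p - q = Quat (re p - re q) (im1 p - im1 q) (im2 p - im2 q) (im3 p - im3 q)"
definition "- q = Quat (- re q) (- im1 q) (- im2 q) (- im3 q)"
definition "p * q = Quat
   (re p * re q - im1 p * im1 q - im2 p * im2 q - im3 p * im3 q)
   (re p * im1 q + im1 p * re q + im2 p * im3 q - im3 p * im2 q)
   (re p * im2 q - im1 p * im3 q + im2 p * re q + im3 p * im1 q)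
   (re p * im3 q + im1 p * im2 q - im2 p * im1 q + im3 p * re q)"
instance ..
end

definition qscalar :: "real \<Rightarrow> quat" where "qscalar r = Quat r 0 0 0"

definition qi :: quat where "qi = Quat 0 1 0 0"
definition qj :: quat where "qj = Quat 0 0 1 0"
definition qk :: quat where "qk = Quat 0 0 0 1"

definition qconj :: "quat \<Rightarrow> quat" where
  "qconj q = Quat (re q) (- im1 q) (- im2 q) (- im3 q)"
definition qN :: "quat \<Rightarrow> quat" where "qN q = q * qconj q"

definition v1 :: quat where "v1 = 1"
definition v2 :: quat where "v2 = qi"
definition v3 :: quat where "v3 = qscalar (1/2) * (1 + qi + qscalar (sqrt 2) * qj)"
definition v4 :: quat where "v4 = qscalar (1/2) * (1 + qi + qscalar (sqrt 2) * qk)"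

definition H122 :: "quat set" where
  "H122 = {qscalar (of_int a) * v1 + qscalar (of_int b) * v2 + qscalar (of_int c) * v3
            + qscalar (of_int d) * v4 | a b c d :: int. True}"

definition H122_units :: "quat set" where
  "H122_units = {u \<in> H122. qN u = 1}"

definition Iid :: "quat set" where
  "Iid = {qscalar 2 * (1 + qi) * h | h. h \<in> H122}"

definition primary :: "quat \<Rightarrow> bool" where
  "primary q \<longleftrightarrow> q \<in> H122 \<and> (q - 1 \<in> Iid \<or> q - (1 + qscalar 2 * v3) \<in> Iid)"

definition odd_norm :: "quat \<Rightarrow> bool" where
  "odd_norm q \<longleftrightarrow> (\<exists>n::int. odd n \<and> qN q = qscalar (of_int n))"

end

theory Submission imports Defs begin

datatype z4 = Z int int int int

fun mulZ :: "z4 \<Rightarrow> z4 \<Rightarrow> z4" where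
 "mulZ (Z a b c d) (Z e f g h) = Z
   (a*e - b*f - b*g - c*g - d*f - d*g - d*h)
   (a*f + b*e + b*h + c*f + c*h - d*g)
   (a*g - b*h + c*e + c*g + d*f + d*g)
   (a*h + b*g - c*f + d*e + d*g + d*h)"

fun subZ :: "z4 \<Rightarrow> z4 \<Rightarrow> z4" where
 "subZ (Z a b c d) (Z e f g h) = Z (a-e) (b-f) (c-g) (d-h)"

fun nf :: "z4 \<Rightarrow> int" where
 "nf (Z a b c d) = a*a + b*b + (a+b)*(c+d) + c*c + d*d + c*d"

fun inI :: "z4 \<Rightarrow> bool" where
 "inI (Z a b c d) = (even a \<and> even b \<and> even c \<and> even d \<and> 4 dvd (a+b+c) \<and> 4 dvd (c-d))"

definition primZ :: "z4 \<Rightarrow> bool" where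
 "primZ y = (inI (subZ y (Z 1 0 0 0)) \<or> inI (subZ y (Z 1 0 2 0)))"

definition UL :: "z4 list" where
 "UL = [Z (-1) (-1) 0 1, Z (-1) (-1) 1 0, Z (-1) (-1) 1 1, Z (-1) 0 0 0, Z (-1) 0 0 1, Z (-1) 0 1 0,
   Z 0 (-1) 0 0, Z 0 (-1) 0 1, Z 0 (-1) 1 0, Z 0 0 (-1) 0, Z 0 0 (-1) 1, Z 0 0 0 (-1), Z 0 0 0 1,
   Z 0 0 1 (-1), Z 0 0 1 0, Z 0 1 (-1) 0, Z 0 1 0 (-1), Z 0 1 0 0, Z 1 0 (-1) 0, Z 1 0 0 (-1),
   Z 1 0 0 0, Z 1 1 (-1) (-1), Z 1 1 (-1) 0, Z 1 1 0 (-1)]"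

definition RL :: "z4 list" where
 "RL = [Z a b c d. a \<leftarrow> [0..3], b \<leftarrow> [0..3], c \<leftarrow> [0..3], d \<leftarrow> [0..3]]"

lemma UL_distinct: "distinct UL" by code_simp

lemma enum_check: "list_all (\<lambda>a. list_all (\<lambda>b. list_all (\<lambda>c. list_all (\<lambda>d.
   nf (Z a b c d) = 1 \<longrightarrow> Z a b c d \<in> set UL) [-1..1]) [-1..1]) [-2..2]) [-2..2]"
  by code_simp

lemma UL_nf: "list_all (\<lambda>u. nf u = 1) UL" by code_simp

lemma main_check: "list_all (\<lambda>b. odd (nf b) \<longrightarrow>
   length (filter (\<lambda>u. primZ (mulZ b u)) UL) = 1 \<and> length (filter (\<lambda>u. primZ (mulZ u b)) UL) = 1) RL"
  by code_simp


fun Em :: "z4 \<Rightarrow> quat" where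
 "Em (Z a b c d) = Quat (of_int a + (of_int c + of_int d)/2) (of_int b + (of_int c + of_int d)/2)
    (of_int c * sqrt 2 / 2) (of_int d * sqrt 2 / 2)"

lemma s2: "sqrt 2 * sqrt 2 = (2::real)" by simp

lemma Em_mul: "Em x * Em y = Em (mulZ x y)"
proof -
  obtain a b c d where x: "x = Z a b c d" by (cases x)
  obtain e f g h where y: "y = Z e f g h" by (cases y)
  show ?thesis unfolding x y times_quat_def
    by (simp add: algebra_simps s2 divide_simps)
qed

lemma Em_sub: "Em x - Em y = Em (subZ x y)"
proof -
  obtain a b c d where x: "x = Z a b c d" by (cases x)
  obtain e f g h where y: "y = Z e f g h" by (cases y)
  show ?thesis unfolding x y minus_quat_def
    by (simp add: algebra_simps divide_simps)
qed

lemma Em_inj: "Em x = Em y \<longleftrightarrow> x = y"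
proof -
  obtain a b c d where x: "x = Z a b c d" by (cases x)
  obtain e f g h where y: "y = Z e f g h" by (cases y)
  show ?thesis unfolding x y by (auto simp: divide_simps)
qed

lemma one_Em: "(1::quat) = Em (Z 1 0 0 0)"
  by (simp add: one_quat_def)

lemma p2_Em: "1 + qscalar 2 * v3 = Em (Z 1 0 2 0)"
  by (simp add: one_quat_def v3_def qscalar_def qi_def qj_def plus_quat_def times_quat_def)

lemma g_Em: "qscalar 2 * (1 + qi) = Em (Z 2 2 0 0)"
  by (simp add: one_quat_def qscalar_def qi_def plus_quat_def times_quat_def)

lemma H122_Em: "H122 = range Em"
proof -
  have "qscalar (of_int a) * v1 + qscalar (of_int b) * v2 + qscalar (of_int c) * v3
            + qscalar (of_int d) * v4 = Em (Z a b c d)" for a b c d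
    by (simp add: one_quat_def v1_def v2_def v3_def v4_def qscalar_def qi_def qj_def qk_def
         plus_quat_def times_quat_def algebra_simps divide_simps)
  moreover have "range Em = {Em (Z a b c d) | a b c d. True}"
  proof (intro set_eqI iffI)
    fix q assume "q \<in> range Em"
    then obtain z where "q = Em z" by auto
    then show "q \<in> {Em (Z a b c d) | a b c d. True}" by (cases z) auto
  next
    fix q assume "q \<in> {Em (Z a b c d) | a b c d. True}"
    then show "q \<in> range Em" by (auto simp del: Em.simps)
  qed
  ultimately show ?thesis unfolding H122_def by simp
qed

lemma qN_Em: "qN (Em x) = qscalar (of_int (nf x))"
proof -
  obtain a b c d where x: "x = Z a b c d" by (cases x)
  show ?thesis unfolding x qN_def qconj_def times_quat_def qscalar_def
    by (simp add: algebra_simps s2 divide_simps power2_eq_square)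
qed

lemma qscalar_inj: "qscalar r = qscalar s \<longleftrightarrow> r = s" by (simp add: qscalar_def)

lemma one_qs: "(1::quat) = qscalar 1" by (simp add: qscalar_def one_quat_def)

lemma Iid_Em: "Em x \<in> Iid \<longleftrightarrow> inI x"
proof
  assume "Em x \<in> Iid"
  then obtain h where "Em x = Em (Z 2 2 0 0) * Em h"
    unfolding Iid_def g_Em H122_Em by auto
  then have "x = mulZ (Z 2 2 0 0) h" by (metis Em_mul Em_inj)
  then show "inI x" by (cases h) (auto simp: algebra_simps)
next
  obtain a b c d where x: "x = Z a b c d" by (cases x)
  assume "inI x"
  then have H: "even a" "even b" "even c" "even d" "(4::int) dvd (a+b+c)" "(4::int) dvd (c-d)"
    unfolding x by auto
  have "(4::int) dvd (b-a-d)" "(4::int) dvd (c+d)" "(4::int) dvd (d-c)"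
    using H by presburger+
  then obtain e f g h where "a+b+c = 4*e" "b-a-d = 4*f" "c+d = 4*g" "d-c = 4*h"
    using H(5) by (metis dvdE)
  then have "x = mulZ (Z 2 2 0 0) (Z e f g h)" unfolding x by simp
  then have "Em x = qscalar 2 * (1 + qi) * Em (Z e f g h)" by (metis g_Em Em_mul)
  then show "Em x \<in> Iid" unfolding Iid_def H122_Em by blast
qed


fun addZ :: "z4 \<Rightarrow> z4 \<Rightarrow> z4" where
 "addZ (Z a b c d) (Z e f g h) = Z (a+e) (b+f) (c+g) (d+h)"
fun s4Z :: "z4 \<Rightarrow> z4" where
 "s4Z (Z a b c d) = Z (4*a) (4*b) (4*c) (4*d)"
fun redZ :: "z4 \<Rightarrow> z4" where
 "redZ (Z a b c d) = Z (a mod 4) (b mod 4) (c mod 4) (d mod 4)"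
fun quoZ :: "z4 \<Rightarrow> z4" where
 "quoZ (Z a b c d) = Z (a div 4) (b div 4) (c div 4) (d div 4)"

lemma red_quo: "x = addZ (redZ x) (s4Z (quoZ x))"
  by (cases x) simp

lemma mul_addR: "mulZ x (addZ y (s4Z z)) = addZ (mulZ x y) (s4Z (mulZ x z))"
  by (cases x; cases y; cases z) (simp add: algebra_simps)

lemma mul_addL: "mulZ (addZ y (s4Z z)) x = addZ (mulZ y x) (s4Z (mulZ z x))"
  by (cases x; cases y; cases z) (simp add: algebra_simps)

lemma sub_add: "subZ (addZ y (s4Z z)) w = addZ (subZ y w) (s4Z z)"
  by (cases w; cases y; cases z) (simp add: algebra_simps)

lemma inI_add: "inI (addZ y (s4Z z)) \<longleftrightarrow> inI y"
  by (cases y; cases z) (simp; presburger)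

lemma primZ_add: "primZ (addZ y (s4Z z)) \<longleftrightarrow> primZ y"
  unfolding primZ_def sub_add inI_add ..

lemma primR: "primZ (mulZ x u) \<longleftrightarrow> primZ (mulZ (redZ x) u)"
  by (subst red_quo[of x]) (simp only: mul_addL primZ_add)

lemma primL: "primZ (mulZ u x) \<longleftrightarrow> primZ (mulZ u (redZ x))"
  by (subst red_quo[of x]) (simp only: mul_addR primZ_add)

lemma nf_add: "odd (nf (addZ y (s4Z z))) \<longleftrightarrow> odd (nf y)"
proof -
  obtain a b c d where y: "y = Z a b c d" by (cases y)
  obtain e f g h where z: "z = Z e f g h" by (cases z)
  have "nf (addZ y (s4Z z)) = nf y + 2 * (2*(2*a*e + 2*b*f + (a+b)*(g+h) + (e+f)*(c+d) + 2*c*g + 2*d*h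
     + c*h + d*g) + 8 * nf z)"
    unfolding y z by (simp add: algebra_simps)
  then show ?thesis by simp
qed

lemma nf_red: "odd (nf x) \<longleftrightarrow> odd (nf (redZ x))"
  by (subst red_quo[of x]) (simp only: nf_add)

lemma red_RL: "redZ x \<in> set RL"
proof -
  have m: "\<And>a::int. a mod 4 \<in> {0..3}" by auto
  show ?thesis by (cases x) (fastforce simp: RL_def m)
qed

lemma sq2: "(c::int)^2 \<le> 2 \<Longrightarrow> -1 \<le> c \<and> c \<le> 1"
proof (rule ccontr)
  assume "c^2 \<le> 2" "\<not> (-1 \<le> c \<and> c \<le> 1)"
  then have "\<bar>2\<bar> \<le> \<bar>c\<bar>" by auto
  then have "2^2 \<le> c^2" using abs_le_square_iff by blast
  then show False using \<open>c^2 \<le> 2\<close> by simp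
qed

lemma nf_UL: "nf x = 1 \<longleftrightarrow> x \<in> set UL"
proof
  assume "x \<in> set UL" then show "nf x = 1" using UL_nf by (simp add: list_all_iff)
next
  obtain a b c d where x: "x = Z a b c d" by (cases x)
  assume "nf x = 1"
  have e: "(2*a+c+d)^2 + (2*b+c+d)^2 + 2*c^2 + 2*d^2 = 4 * nf (Z a b c d)"
    by (simp add: power2_eq_square algebra_simps)
  have n1: "nf (Z a b c d) = 1" using \<open>nf x = 1\<close> x by simp
  have p: "0 \<le> (2*a+c+d)^2" "0 \<le> (2*b+c+d)^2" "0 \<le> c^2" "0 \<le> d^2" by simp_all
  have c: "-1 \<le> c \<and> c \<le> 1" using e p n1 by (intro sq2) linarith
  have d: "-1 \<le> d \<and> d \<le> 1" using e p n1 by (intro sq2) linarith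
  have "(2*a+c+d)^2 \<le> 4" using e p n1 by linarith
  then have "(2*a+c+d)^2 \<le> 2^2" by simp
  then have "\<bar>2*a+c+d\<bar> \<le> \<bar>2\<bar>" using abs_le_square_iff by blast
  then have a: "-2 \<le> a \<and> a \<le> 2" using c d by arith
  have "(2*b+c+d)^2 \<le> 4" using e p n1 by linarith
  then have "(2*b+c+d)^2 \<le> 2^2" by simp
  then have "\<bar>2*b+c+d\<bar> \<le> \<bar>2\<bar>" using abs_le_square_iff by blast
  then have b: "-2 \<le> b \<and> b \<le> 2" using c d by arith
  have E: "\<forall>a\<in>set [-2..2]. \<forall>b\<in>set [-2..2]. \<forall>c\<in>set [-1..1]. \<forall>d\<in>set [-1..1].
     nf (Z a b c d) = 1 \<longrightarrow> Z a b c d \<in> set UL" using enum_check by (simp only: list_all_iff)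
  have "a \<in> set [-2..2]" "b \<in> set [-2..2]" "c \<in> set [-1..1]" "d \<in> set [-1..1]"
    using a b c d by (simp_all only: set_upto atLeastAtMost_iff)
  then show "x \<in> set UL" using E n1 unfolding x by blast
qed

lemma units_Em: "u \<in> H122_units \<longleftrightarrow> (\<exists>w. u = Em w \<and> w \<in> set UL)"
  unfolding H122_units_def H122_Em one_qs
  by (auto simp: qN_Em qscalar_inj nf_UL)

lemma primary_Em: "primary (Em y) \<longleftrightarrow> primZ y"
  unfolding primary_def p2_Em unfolding primZ_def H122_Em one_Em Em_sub Iid_Em by simp

lemma filter1: "length (filter P xs) = 1 \<Longrightarrow> \<exists>!w. w \<in> set xs \<and> P w"
proof -
  assume "length (filter P xs) = 1"
  then obtain y where y: "filter P xs = [y]" by (auto simp: length_Suc_conv)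
  then have "y \<in> set (filter P xs)" by simp
  moreover have "w = y" if "w \<in> set xs" "P w" for w
  proof -
    have "w \<in> set (filter P xs)" using that by simp
    then show ?thesis using y by simp
  qed
  ultimately show ?thesis by auto
qed

theorem lemma15:
  assumes "b \<in> H122" and "odd_norm b"
  shows "(\<exists>!u. u \<in> H122_units \<and> primary (b * u))
       \<and> (\<exists>!u'. u' \<in> H122_units \<and> primary (u' * b))"
proof -
  obtain x where bx: "b = Em x" using assms(1) H122_Em by auto
  have "odd (nf x)" using assms(2) unfolding bx odd_norm_def qN_Em qscalar_inj by auto
  then have "odd (nf (redZ x))" using nf_red by simp
  then have L: "length (filter (\<lambda>u. primZ (mulZ (redZ x) u)) UL) = 1 \<and>
     length (filter (\<lambda>u. primZ (mulZ u (redZ x))) UL) = 1"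
    using main_check red_RL[of x] by (simp add: list_all_iff)
  have R1: "\<exists>!w. w \<in> set UL \<and> primZ (mulZ x w)"
    using filter1[OF conjunct1[OF L]] by (simp add: primR[symmetric])
  have R2: "\<exists>!w. w \<in> set UL \<and> primZ (mulZ w x)"
    using filter1[OF conjunct2[OF L]] by (simp add: primL[symmetric])
  have pr: "primary (b * Em w) \<longleftrightarrow> primZ (mulZ x w)" for w
    unfolding bx Em_mul primary_Em ..
  have pl: "primary (Em w * b) \<longleftrightarrow> primZ (mulZ w x)" for w
    unfolding bx Em_mul primary_Em ..
  have "\<exists>!u. u \<in> H122_units \<and> primary (b * u)"
  proof -
    from R1 obtain w where w: "w \<in> set UL" "primZ (mulZ x w)"
      and wu: "\<And>w'. w' \<in> set UL \<and> primZ (mulZ x w') \<Longrightarrow> w' = w" by blast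
    show ?thesis
    proof (rule ex1I[of _ "Em w"])
      show "Em w \<in> H122_units \<and> primary (b * Em w)" using w units_Em pr by auto
    next
      fix u assume "u \<in> H122_units \<and> primary (b * u)"
      then obtain w' where "u = Em w'" "w' \<in> set UL" "primZ (mulZ x w')"
        using units_Em pr by auto
      then show "u = Em w" using wu by auto
    qed
  qed
  moreover have "\<exists>!u. u \<in> H122_units \<and> primary (u * b)"
  proof -
    from R2 obtain w where w: "w \<in> set UL" "primZ (mulZ w x)"
      and wu: "\<And>w'. w' \<in> set UL \<and> primZ (mulZ w' x) \<Longrightarrow> w' = w" by blast
    show ?thesis
    proof (rule ex1I[of _ "Em w"])
      show "Em w \<in> H122_units \<and> primary (Em w * b)" using w units_Em pl by auto
    next
      fix u assume "u \<in> H122_units \<and> primary (u * b)"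
      then obtain w' where "u = Em w'" "w' \<in> set UL" "primZ (mulZ w' x)"
        using units_Em pl by auto
      then show "u = Em w" using wu by auto
    qed
  qed
  ultimately show ?thesis by blast
qed

end
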